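(* Let $q_1,q_2,q_3,q_4$ satisfy $q_1q_2q_3q_4=1$, let $x$ be a variable, let $a\in\{1,2,3,4\}$, and let $\pi$ be a finite solid partition all of whose elements have $a$-th coordinate equal to $1$. Put $$\mathbf R=\sum_{(i_1,i_2,i_3,i_4)\in\pi}x\,q_1^{i_1-1}q_2^{i_2-1}q_3^{i_3-1}q_4^{i_4-1},$$ and define $$\mathcal Z^{\mathrm{D8}}_{\underline 4;4}[\pi,K]=\mathbb I\big[-(1-K^{-1})x^{-1}\mathbf R+\mathbf P_{123}^\vee\mathbf R^\vee\mathbf R\big],\qquad \widetilde{\mathcal Z}^{\mathrm{D6}}_{\bar a}[\pi]=\mathbb I\big[-\mathbf P_a^\vee x^{-1}\mathbf R+\mathbf P_{\bar a}^\vee\mathbf R^\vee\mathbf R\big].$$ Then, specializing $K=q_a$, $$(-1)^{\sigma_4(\pi)}\,\mathcal Z^{\mathrm{D8}}_{\underline 4;4}[\pi,q_a]=\widetilde{\mathcal Z}^{\mathrm{D6}}_{\bar a}[\pi],\qquad \sigma_4(\pi)=\#\{(i,i,i,j)\in\pi:i<j\}.$$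
   Context: A finite solid partition is a finite set $\pi\subset\mathbb Z_{\ge1}^4$ such that if $(i_1,\dots,i_4)\in\pi$ and $1\le i'_b\le i_b$ for all $b$ then $(i'_1,\dots,i'_4)\in\pi$. Characters are finite $\mathbb Z$-combinations of Laurent monomials; after substituting $q_4=(q_1q_2q_3)^{-1}$ the characters above are Laurent polynomials in $q_1,q_2,q_3$ and $K$ ($x$ cancels). $\mathbf X^\vee$ replaces each monomial $m$ by $m^{-1}$. $\mathbf P_a^\vee=1-q_a^{-1}$, and for $S\subseteq\{1,2,3,4\}$, $\mathbf P_S^\vee=\prod_{b\in S}(1-q_b^{-1})$; $\bar a=\{1,2,3,4\}\setminus\{a\}$. A character is movable if its constant-monomial coefficient is zero; for a movable character $\sum_m n_m m$ the index is $\mathbb I[\sum_m n_m m]=\prod_m(1-m^{-1})^{n_m}$. The characters inside both indices are movable, so both sides are well-defined. *)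

theory Defs
  imports Complex_Main "HOL-Library.Poly_Mapping" "HOL-Library.Product_Plus"
begin

text \<open>Laurent monomials in q1, q2, q3, x, K (after substituting q4 = (q1 q2 q3)^(-1)),
  represented by their exponent vectors; multiplication of monomials is addition.\<close>
type_synonym mon = "int \<times> int \<times> int \<times> int \<times> int"

text \<open>Characters: finite Z-combinations of Laurent monomials (convolution product).\<close>
type_synonym character = "mon \<Rightarrow>\<^sub>0 int"

fun mscale :: "int \<Rightarrow> mon \<Rightarrow> mon" where
  "mscale k (a, b, c, d, e) = (k * a, k * b, k * c, k * d, k * e)"

definition qv :: "nat \<Rightarrow> mon" where
  "qv b = (if b = 1 then (1, 0, 0, 0, 0) else if b = 2 then (0, 1, 0, 0, 0)
           else if b = 3 then (0, 0, 1, 0, 0) else (-1, -1, -1, 0, 0))"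

definition xv :: mon where "xv = (0, 0, 0, 1, 0)"
definition Kv :: mon where "Kv = (0, 0, 0, 0, 1)"

definition mono :: "mon \<Rightarrow> character" where
  "mono m = Poly_Mapping.single m 1"

definition dual :: "character \<Rightarrow> character" where
  "dual \<chi> = (\<Sum>m\<in>Poly_Mapping.keys \<chi>. Poly_Mapping.single (- m) (Poly_Mapping.lookup \<chi> m))"

definition Pv :: "nat set \<Rightarrow> character" where
  "Pv S = (\<Prod>b\<in>S. 1 - mono (- qv b))"

type_synonym point4 = "nat \<times> nat \<times> nat \<times> nat"

fun coord :: "nat \<Rightarrow> point4 \<Rightarrow> nat" where
  "coord b (i1, i2, i3, i4) = (if b = 1 then i1 else if b = 2 then i2 else if b = 3 then i3 else i4)"

definition solid_partition :: "point4 set \<Rightarrow> bool" where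
  "solid_partition \<pi> \<longleftrightarrow> finite \<pi> \<and> (\<forall>p\<in>\<pi>. \<forall>b\<in>{1..4}. 1 \<le> coord b p) \<and>
     (\<forall>p\<in>\<pi>. \<forall>p'. (\<forall>b\<in>{1..4}. 1 \<le> coord b p' \<and> coord b p' \<le> coord b p) \<longrightarrow> p' \<in> \<pi>)"

definition box_mon :: "point4 \<Rightarrow> mon" where
  "box_mon p = xv + (\<Sum>b\<in>{1..4}. mscale (int (coord b p) - 1) (qv b))"

definition Rchar :: "point4 set \<Rightarrow> character" where
  "Rchar \<pi> = (\<Sum>p\<in>\<pi>. mono (box_mon p))"

definition D8char :: "point4 set \<Rightarrow> character" where
  "D8char \<pi> = - ((1 - mono (- Kv)) * mono (- xv) * Rchar \<pi>)
               + Pv {1, 2, 3} * dual (Rchar \<pi>) * Rchar \<pi>"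

definition D6char :: "nat \<Rightarrow> point4 set \<Rightarrow> character" where
  "D6char a \<pi> = - (Pv {a} * mono (- xv) * Rchar \<pi>)
               + Pv ({1, 2, 3, 4} - {a}) * dual (Rchar \<pi>) * Rchar \<pi>"

fun evm :: "'f::field \<times> 'f \<times> 'f \<times> 'f \<times> 'f \<Rightarrow> mon \<Rightarrow> 'f" where
  "evm (q1, q2, q3, x, K) (e1, e2, e3, e4, e5) =
     q1 powi e1 * q2 powi e2 * q3 powi e3 * x powi e4 * K powi e5"

text \<open>Value of the index I[chi] = prod_m (1 - m^(-1))^(n_m) at a point.\<close>
definition index_at :: "'f::field \<times> 'f \<times> 'f \<times> 'f \<times> 'f \<Rightarrow> character \<Rightarrow> 'f" where
  "index_at v \<chi> = (\<Prod>m\<in>Poly_Mapping.keys \<chi>. (1 - inverse (evm v m)) powi (Poly_Mapping.lookup \<chi> m))"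

definition sigma4 :: "point4 set \<Rightarrow> nat" where
  "sigma4 \<pi> = card {p\<in>\<pi>. \<exists>i j. p = (i, i, i, j) \<and> i < j}"

end

theory Submission
  imports Defs
begin


definition push :: "(mon \<Rightarrow> mon) \<Rightarrow> character \<Rightarrow> character" where
  "push f \<chi> = frag_extend (\<lambda>m. frag_of (f m)) \<chi>"

lemma lookup_push:
  "Poly_Mapping.lookup (push f \<chi>) n = (\<Sum>m\<in>Poly_Mapping.keys \<chi>. if f m = n then Poly_Mapping.lookup \<chi> m else 0)"
  unfolding push_def frag_extend_def
  by (auto simp: lookup_sum intro!: sum.cong)

lemma push_add: "push f (a + b) = push f a + push f b"
  unfolding push_def by (rule frag_extend_add)
lemma push_diff: "push f (a - b) = push f a - push f b"
  unfolding push_def by (rule frag_extend_diff)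
lemma push_minus: "push f (- a) = - push f a"
  unfolding push_def by (rule frag_extend_minus)
lemma push_sum: "finite I \<Longrightarrow> push f (\<Sum>i\<in>I. g i) = (\<Sum>i\<in>I. push f (g i))"
  unfolding push_def by (simp add: frag_extend_sum o_def)
lemma push_mono: "push f (mono m) = mono (f m)"
  unfolding push_def mono_def by simp
lemma push_zero: "push f 0 = 0"
  unfolding push_def by simp

lemma push_mult:
  assumes hom: "\<And>x y. f (x + y) = f x + f y"
  shows "push f (a * b) = push f a * push f b"
proof -
  have "\<forall>b. push f (a * b) = push f a * push f b"
    using subset_UNIV[of "Poly_Mapping.keys a"]
  proof (induction a rule: frag_induction)
    case zero then show ?case by (simp add: push_zero)
  next
    case (one x)
    show ?case
    proof
      fix b
      show "push f (frag_of x * b) = push f (frag_of x) * push f b"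
        using subset_UNIV[of "Poly_Mapping.keys b"]
      proof (induction b rule: frag_induction)
        case zero then show ?case by (simp add: push_zero)
      next
        case (one y)
        then show ?case using push_mono[unfolded mono_def] by (simp add: mult_single hom)
      next
        case (diff a b)
        then show ?case by (simp add: right_diff_distrib push_diff)
      qed
    qed
  next
    case (diff a b)
    then show ?case by (simp add: left_diff_distrib push_diff)
  qed
  then show ?thesis by blast
qed

lemma push_one: "f 0 = 0 \<Longrightarrow> push f 1 = 1"
  using push_mono[of f 0] unfolding mono_def by simp

lemma push_prod:
  assumes hom: "\<And>x y. f (x + y) = f x + f y" and "f 0 = 0"
  shows "finite S \<Longrightarrow> push f (\<Prod>i\<in>S. g i) = (\<Prod>i\<in>S. push f (g i))"
  by (induction S rule: finite_induct) (simp_all add: push_one[of f, OF assms(2)] push_mult[OF hom])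

lemma frag_cmul_single: "frag_cmul c (Poly_Mapping.single m 1) = Poly_Mapping.single m c"
  by (rule poly_mapping_eqI) (auto simp: lookup_single when_def)

lemma push_id_on:
  assumes "\<forall>m\<in>Poly_Mapping.keys \<chi>. f m = m"
  shows "push f \<chi> = \<chi>"
proof -
  have "push f \<chi> = frag_extend frag_of \<chi>"
    unfolding push_def by (rule frag_extend_eq) (use assms in auto)
  then show ?thesis by (metis frag_expansion)
qed

lemma dual_push: "dual \<chi> = push uminus \<chi>"
  unfolding dual_def push_def frag_extend_def by (simp add: frag_cmul_single)

lemma lookup_dual: "Poly_Mapping.lookup (dual (\<chi>::character)) m = Poly_Mapping.lookup \<chi> (- m)"
proof -
  have "Poly_Mapping.lookup (dual \<chi>) m = (\<Sum>k\<in>Poly_Mapping.keys \<chi>. if k = - m then Poly_Mapping.lookup \<chi> k else 0)"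
    unfolding dual_push lookup_push by (rule sum.cong) auto
  also have "\<dots> = Poly_Mapping.lookup \<chi> (- m)"
    by (simp add: sum.delta in_keys_iff)
  finally show ?thesis .
qed



definition PI :: "(mon \<Rightarrow> complex) \<Rightarrow> character \<Rightarrow> complex" where
  "PI \<phi> \<chi> = (\<Prod>m\<in>Poly_Mapping.keys \<chi>. \<phi> m powi Poly_Mapping.lookup \<chi> m)"

lemma index_at_PI: "index_at w \<chi> = PI (\<lambda>m. 1 - inverse (evm w m)) \<chi>"
  unfolding index_at_def PI_def ..

lemma PI_superset:
  assumes "finite S" "Poly_Mapping.keys \<chi> \<subseteq> S"
  shows "PI \<phi> \<chi> = (\<Prod>m\<in>S. \<phi> m powi Poly_Mapping.lookup \<chi> m)"
  unfolding PI_def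
  by (rule prod.mono_neutral_left) (use assms in \<open>auto simp: in_keys_iff\<close>)

lemma PI_add:
  assumes "\<forall>m\<in>Poly_Mapping.keys a \<union> Poly_Mapping.keys b. \<phi> m \<noteq> 0"
  shows "PI \<phi> (a + b) = PI \<phi> a * PI \<phi> b"
proof -
  let ?S = "Poly_Mapping.keys a \<union> Poly_Mapping.keys b"
  have "PI \<phi> (a + b) = (\<Prod>m\<in>?S. \<phi> m powi Poly_Mapping.lookup (a + b) m)"
    by (rule PI_superset) (auto simp: keys_add)
  also have "\<dots> = (\<Prod>m\<in>?S. \<phi> m powi Poly_Mapping.lookup a m * \<phi> m powi Poly_Mapping.lookup b m)"
    by (rule prod.cong) (use assms in \<open>auto simp: lookup_add power_int_add\<close>)
  also have "\<dots> = PI \<phi> a * PI \<phi> b"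
    by (simp add: prod.distrib PI_superset[of ?S a] PI_superset[of ?S b])
  finally show ?thesis .
qed

lemma PI_minus: "PI \<phi> (- a) = inverse (PI \<phi> a)"
  unfolding PI_def
  by (simp add: power_int_minus prod_inversef[symmetric] o_def)

lemma PI_diff:
  assumes "\<forall>m\<in>Poly_Mapping.keys a \<union> Poly_Mapping.keys b. \<phi> m \<noteq> 0"
  shows "PI \<phi> (a - b) = PI \<phi> a / PI \<phi> b"
proof -
  have "PI \<phi> (a + - b) = PI \<phi> a * PI \<phi> (- b)"
    by (rule PI_add) (use assms in auto)
  then show ?thesis by (simp add: PI_minus divide_inverse)
qed

lemma PI_mono: "PI \<phi> (mono m) = \<phi> m"
  unfolding PI_def mono_def by simp

lemma PI_zero: "PI \<phi> 0 = 1"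
  unfolding PI_def by simp

lemma PI_sum:
  assumes "\<forall>m. \<phi> m \<noteq> 0"
  shows "finite I \<Longrightarrow> PI \<phi> (\<Sum>i\<in>I. g i) = (\<Prod>i\<in>I. PI \<phi> (g i))"
  by (induction I rule: finite_induct) (simp_all add: PI_zero PI_add assms)

lemma power_int_sum:
  fixes z :: complex
  assumes "z \<noteq> 0"
  shows "finite A \<Longrightarrow> z powi (\<Sum>i\<in>A. e i) = (\<Prod>i\<in>A. z powi e i)"
  by (induction A rule: finite_induct) (simp_all add: power_int_add assms)

lemma PI_push:
  assumes "\<forall>m\<in>Poly_Mapping.keys \<chi>. \<psi> (f m) = \<phi> m \<and> \<phi> m \<noteq> 0"
  shows "PI \<psi> (push f \<chi>) = PI \<phi> \<chi>"
proof -
  let ?T = "f ` Poly_Mapping.keys \<chi>"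
  have sub: "Poly_Mapping.keys (push f \<chi>) \<subseteq> ?T"
  proof
    fix n assume "n \<in> Poly_Mapping.keys (push f \<chi>)"
    then have "(\<Sum>m\<in>Poly_Mapping.keys \<chi>. if f m = n then Poly_Mapping.lookup \<chi> m else 0) \<noteq> 0"
      by (simp add: in_keys_iff lookup_push)
    moreover have "(\<Sum>m\<in>Poly_Mapping.keys \<chi>. if f m = n then poly_mapping.lookup \<chi> m else 0) = 0"
      if "\<forall>m\<in>Poly_Mapping.keys \<chi>. f m \<noteq> n" using that by (intro sum.neutral) auto
    ultimately obtain m where "m \<in> Poly_Mapping.keys \<chi>" "f m = n"
      by blast
    then show "n \<in> ?T" by blast
  qed
  have "PI \<psi> (push f \<chi>) = (\<Prod>n\<in>?T. \<psi> n powi Poly_Mapping.lookup (push f \<chi>) n)"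
    by (rule PI_superset[OF _ sub]) simp
  also have "\<dots> = (\<Prod>n\<in>?T. \<Prod>m\<in>{m\<in>Poly_Mapping.keys \<chi>. f m = n}. \<phi> m powi Poly_Mapping.lookup \<chi> m)"
  proof (rule prod.cong[OF refl])
    fix n assume n: "n \<in> ?T"
    then obtain m0 where m0: "m0 \<in> Poly_Mapping.keys \<chi>" "f m0 = n" by blast
    have nz: "\<psi> n \<noteq> 0" using assms m0 by auto
    have "Poly_Mapping.lookup (push f \<chi>) n = (\<Sum>m\<in>{m\<in>Poly_Mapping.keys \<chi>. f m = n}. Poly_Mapping.lookup \<chi> m)"
      by (simp add: lookup_push sum.inter_filter)
    then have "\<psi> n powi Poly_Mapping.lookup (push f \<chi>) n = (\<Prod>m\<in>{m\<in>Poly_Mapping.keys \<chi>. f m = n}. \<psi> n powi Poly_Mapping.lookup \<chi> m)"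
      by (simp add: power_int_sum[OF nz])
    also have "\<dots> = (\<Prod>m\<in>{m\<in>Poly_Mapping.keys \<chi>. f m = n}. \<phi> m powi Poly_Mapping.lookup \<chi> m)"
      by (rule prod.cong) (use assms in auto)
    finally show "\<psi> n powi Poly_Mapping.lookup (push f \<chi>) n = (\<Prod>m\<in>{m\<in>Poly_Mapping.keys \<chi>. f m = n}. \<phi> m powi Poly_Mapping.lookup \<chi> m)" .
  qed
  also have "\<dots> = PI \<phi> \<chi>"
    unfolding PI_def by (rule prod.group) auto
  finally show ?thesis .
qed



lemma evm_add:
  fixes q1 q2 q3 x K :: complex
  assumes "q1 \<noteq> 0" "q2 \<noteq> 0" "q3 \<noteq> 0" "x \<noteq> 0" "K \<noteq> 0"
  shows "evm (q1, q2, q3, x, K) (m + n) = evm (q1, q2, q3, x, K) m * evm (q1, q2, q3, x, K) n"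
proof -
  obtain a1 a2 a3 a4 a5 where m: "m = (a1, a2, a3, a4, a5)" by (cases m) auto
  obtain b1 b2 b3 b4 b5 where n: "n = (b1, b2, b3, b4, b5)" by (cases n) auto
  have "evm (q1, q2, q3, x, K) (m + n) = (q1 powi a1 * q1 powi b1) * (q2 powi a2 * q2 powi b2) *
     (q3 powi a3 * q3 powi b3) * (x powi a4 * x powi b4) * (K powi a5 * K powi b5)"
    unfolding m n using assms by (simp add: power_int_add)
  also have "\<dots> = evm (q1, q2, q3, x, K) m * evm (q1, q2, q3, x, K) n"
    unfolding m n by (simp only: evm.simps mult_ac)
  finally show ?thesis .
qed

lemma evm_nz:
  fixes q1 q2 q3 x K :: complex
  assumes "q1 \<noteq> 0" "q2 \<noteq> 0" "q3 \<noteq> 0" "x \<noteq> 0" "K \<noteq> 0"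
  shows "evm (q1, q2, q3, x, K) m \<noteq> 0"
  using assms by (cases m) simp

lemma evm_zero: "evm w 0 = 1"
  by (cases w) (simp add: zero_prod_def)

lemma evm_uminus:
  fixes q1 q2 q3 x K :: complex
  shows "evm (q1, q2, q3, x, K) (- m) = inverse (evm (q1, q2, q3, x, K) m)"
  by (cases m) (simp add: power_int_minus mult_ac)

lemma evm_mscale:
  fixes q1 q2 q3 x K :: complex
  shows "evm (q1, q2, q3, x, K) (mscale k m) = evm (q1, q2, q3, x, K) m powi k"
  by (cases m) (simp add: power_int_mult mult.commute[of k] power_int_mult_distrib)



definition sub :: "nat \<Rightarrow> mon \<Rightarrow> mon" where
  "sub a m = (case m of (e1, e2, e3, e4, e5) \<Rightarrow> (e1, e2, e3, e4, 0) + mscale e5 (qv a))"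

lemma mscale_add: "mscale (k + l) v = mscale k v + mscale l v"
  by (cases v) (simp add: algebra_simps)

lemma mscale_zero: "mscale 0 v = 0"
  by (cases v) (simp add: zero_prod_def)

lemma sub_add: "sub a (m + n) = sub a m + sub a n"
  by (cases m; cases n) (simp add: sub_def mscale_add algebra_simps)

lemma sub_zero: "sub a 0 = 0"
  by (simp add: sub_def zero_prod_def mscale_zero)

lemma sub_fix: "snd (snd (snd (snd m))) = 0 \<Longrightarrow> sub a m = m"
  by (cases m) (simp add: sub_def mscale_zero)

lemma qv_fifth: "snd (snd (snd (snd (qv b)))) = 0"
  by (simp add: qv_def)

lemma sub_qv: "sub a (- qv b) = - qv b"
  by (rule sub_fix) (simp add: qv_def)

lemma sub_Kv: "sub a (- Kv) = - qv a"
  by (simp add: sub_def Kv_def qv_def)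

lemma sub_xv: "sub a (- xv) = - xv"
  by (simp add: sub_def xv_def mscale_zero)

lemma box_mon_eq:
  "box_mon (i1, i2, i3, i4) = (int i1 - int i4, int i2 - int i4, int i3 - int i4, 1, 0)"
proof -
  have "{1..4::nat} = {1, 2, 3, 4}" by auto
  then show ?thesis
    unfolding box_mon_def by (simp add: qv_def xv_def algebra_simps)
qed

lemma sub_box: "sub a (box_mon p) = box_mon p"
  by (cases p) (simp add: box_mon_eq sub_fix)

lemma sub_mbox: "sub a (- box_mon p) = - box_mon p"
  by (cases p) (simp add: box_mon_eq sub_fix)

lemma evm_sub:
  fixes q1 q2 q3 x :: complex
  assumes "q1 \<noteq> 0" "q2 \<noteq> 0" "q3 \<noteq> 0" "x \<noteq> 0"
  shows "evm (q1, q2, q3, x, evm (q1, q2, q3, x, 1) (qv a)) m = evm (q1, q2, q3, x, 1) (sub a m)"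
proof -
  obtain e1 e2 e3 e4 e5 where m: "m = (e1, e2, e3, e4, e5)" by (cases m) auto
  have "evm (q1, q2, q3, x, 1) (sub a m) =
     evm (q1, q2, q3, x, 1) (e1, e2, e3, e4, 0) * evm (q1, q2, q3, x, 1) (mscale e5 (qv a))"
    unfolding m sub_def by (simp only: prod.case evm_add[OF assms one_neq_zero])
  also have "\<dots> = evm (q1, q2, q3, x, evm (q1, q2, q3, x, 1) (qv a)) m"
    unfolding m evm_mscale by simp
  finally show ?thesis by simp
qed

lemma Rchar_dual: "finite \<pi> \<Longrightarrow> dual (Rchar \<pi>) = (\<Sum>p\<in>\<pi>. mono (- box_mon p))"
  unfolding Rchar_def dual_push by (simp add: push_sum push_mono)

lemma push_R: "finite \<pi> \<Longrightarrow> push (sub a) (Rchar \<pi>) = Rchar \<pi>"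
  unfolding Rchar_def by (simp add: push_sum push_mono sub_box)

lemma push_dR: "finite \<pi> \<Longrightarrow> push (sub a) (dual (Rchar \<pi>)) = dual (Rchar \<pi>)"
  by (simp add: Rchar_dual push_sum push_mono sub_mbox)

lemma push_sub_one: "push (sub a) 1 = 1"
  by (rule push_one) (rule sub_zero)

lemma push_Pv: "finite S \<Longrightarrow> push (sub a) (Pv S) = Pv S"
  unfolding Pv_def
  by (simp add: push_prod[of "sub a", OF sub_add sub_zero] push_diff push_sub_one push_mono sub_qv)

lemma push_D8:
  assumes "finite \<pi>"
  shows "push (sub a) (D8char \<pi>) = - (Pv {a} * mono (- xv) * Rchar \<pi>) + Pv {1, 2, 3} * dual (Rchar \<pi>) * Rchar \<pi>"
proof -
  have "Pv {a} = 1 - mono (- qv a)" unfolding Pv_def by simp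
  then show ?thesis
    unfolding D8char_def
    by (simp add: push_add push_minus push_mult[OF sub_add] push_diff push_sub_one
        push_mono sub_Kv sub_xv push_R push_dR push_Pv assms)
qed



lemma ring_id:
  fixes Xa Xb Xc Ya Yb Yc :: "'r::comm_ring_1"
  assumes "Xa * Ya = 1" "Xb * Yb = 1" "Xc * Yc = 1"
  shows "(1 - Ya) * (1 - Yb) * (1 - Yc) - (1 - Yb) * (1 - Yc) * (1 - Xa * Xb * Xc)
       = (1 - Xb) * (1 - Xc) * Xa - (1 - Yb) * (1 - Yc) * Ya"
proof -
  have b: "1 - Xb = - (Xb * (1 - Yb))" using assms(2) by (simp add: algebra_simps)
  have c: "1 - Xc = - (Xc * (1 - Yc))" using assms(3) by (simp add: algebra_simps)
  have "(1 - Xb) * (1 - Xc) * Xa = (1 - Yb) * (1 - Yc) * (Xa * Xb * Xc)"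
    unfolding b c by (simp add: algebra_simps)
  then show ?thesis by (simp add: algebra_simps)
qed

lemma uminus_add_mon: "- (x + y) = - x + - (y::mon)" by simp

lemma dual_mult: "dual (x * y) = dual x * dual y"
  unfolding dual_push by (rule push_mult) simp
lemma dual_diff: "dual (x - y) = dual x - dual y"
  unfolding dual_push by (rule push_diff)
lemma dual_one: "dual 1 = 1"
  unfolding dual_push by (rule push_one) simp
lemma dual_mono: "dual (mono m) = mono (- m)"
  unfolding dual_push by (rule push_mono)
lemma dual_dual: "dual (dual x) = x"
  by (rule poly_mapping_eqI) (simp add: lookup_dual)

lemma mono_mult: "mono m * mono n = mono (m + n)"
  unfolding mono_def by (simp add: mult_single)

lemma mono_inv: "mono m * mono (- m) = 1"
  unfolding mono_mult by (simp add: mono_def)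

definition Ych :: "nat \<Rightarrow> point4 set \<Rightarrow> character" where
  "Ych a \<pi> = Pv ({1, 2, 3} - {a}) * mono (- qv a) * dual (Rchar \<pi>) * Rchar \<pi>"

lemma Pv3:
  assumes "x \<noteq> y" "x \<noteq> z" "y \<noteq> z"
  shows "Pv {x, y, z} = (1 - mono (- qv x)) * (1 - mono (- qv y)) * (1 - mono (- qv z))"
  unfolding Pv_def using assms by (simp add: mult_ac)

lemma Pv2:
  assumes "x \<noteq> y"
  shows "Pv {x, y} = (1 - mono (- qv x)) * (1 - mono (- qv y))"
  unfolding Pv_def using assms by simp

lemma ident_gen:
  assumes o: "{1, 2, 3} - {a} = {b, c}" and t: "{1, 2, 3} = {a, b, c}"
    and ab: "{1, 2, 3, 4} - {a} = {b, c, 4}"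
    and d: "b \<noteq> c" "a \<noteq> b" "a \<noteq> c" "b \<noteq> 4" "c \<noteq> 4"
    and q: "qv a + qv b + qv c = - qv 4" and fin: "finite \<pi>"
  shows "push (sub a) (D8char \<pi>) = D6char a \<pi> + (dual (Ych a \<pi>) - Ych a \<pi>)"
proof -
  define Xa where "Xa = mono (qv a)"
  define Xb where "Xb = mono (qv b)"
  define Xc where "Xc = mono (qv c)"
  define Ya where "Ya = mono (- qv a)"
  define Yb where "Yb = mono (- qv b)"
  define Yc where "Yc = mono (- qv c)"
  define R where "R = Rchar \<pi>"
  define dR where "dR = dual (Rchar \<pi>)"
  have inv: "Xa * Ya = 1" "Xb * Yb = 1" "Xc * Yc = 1"
    unfolding Xa_def Xb_def Xc_def Ya_def Yb_def Yc_def by (simp_all add: mono_inv)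
  have P123: "Pv {1, 2, 3} = (1 - Ya) * (1 - Yb) * (1 - Yc)"
    unfolding t Ya_def Yb_def Yc_def using d by (simp add: Pv3)
  have m4: "mono (- qv 4) = Xa * Xb * Xc"
    unfolding Xa_def Xb_def Xc_def mono_mult q[symmetric] by simp
  have Pa: "Pv ({1, 2, 3, 4} - {a}) = (1 - Yb) * (1 - Yc) * (1 - Xa * Xb * Xc)"
    unfolding ab Yb_def Yc_def m4[symmetric] using d by (simp add: Pv3)
  have Po: "Pv ({1, 2, 3} - {a}) = (1 - Yb) * (1 - Yc)"
    unfolding o Yb_def Yc_def using d by (simp add: Pv2)
  have Y: "Ych a \<pi> = (1 - Yb) * (1 - Yc) * Ya * dR * R"
    unfolding Ych_def Po Ya_def R_def dR_def ..
  have dd: "dual Ya = Xa" "dual Yb = Xb" "dual Yc = Xc" "dual dR = R" "dual R = dR"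
    unfolding Xa_def Xb_def Xc_def Ya_def Yb_def Yc_def dR_def R_def dual_dual dual_mono by simp_all
  have dY: "dual (Ych a \<pi>) = (1 - Xb) * (1 - Xc) * Xa * dR * R"
    unfolding Y by (simp only: dual_mult dual_diff dual_one dd) (simp add: mult_ac)
  have key0: "dual (Ych a \<pi>) - Ych a \<pi> = ((1 - Xb) * (1 - Xc) * Xa - (1 - Yb) * (1 - Yc) * Ya) * dR * R"
    by (subst dY, subst Y) (simp add: algebra_simps)
  have key: "dual (Ych a \<pi>) - Ych a \<pi> = (Pv {1, 2, 3} - Pv ({1, 2, 3, 4} - {a})) * dR * R"
    unfolding key0 P123 Pa ring_id[OF inv] ..
  show ?thesis
    unfolding push_D8[OF fin] D6char_def key R_def[symmetric] dR_def[symmetric]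
    by (simp add: algebra_simps dd(5))
qed

lemma ident:
  assumes "a \<in> {1, 2, 3}" "finite \<pi>"
  shows "push (sub a) (D8char \<pi>) = D6char a \<pi> + (dual (Ych a \<pi>) - Ych a \<pi>)"
proof -
  have q: "qv 1 + qv 2 + qv 3 = - qv 4" by (simp add: qv_def)
  from assms(1) consider "a = 1" | "a = 2" | "a = 3" by auto
  then show ?thesis
  proof cases
    case 1 then show ?thesis
      by (intro ident_gen[of a 2 3] assms(2)) (insert q, auto simp: algebra_simps)
  next
    case 2 then show ?thesis
      by (intro ident_gen[of a 1 3] assms(2)) (insert q, auto simp: algebra_simps)
  next
    case 3 then show ?thesis
      by (intro ident_gen[of a 1 2] assms(2)) (insert q, auto simp: algebra_simps)
  qed
qed

lemma ident4:
  assumes "finite \<pi>"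
  shows "push (sub 4) (D8char \<pi>) = D6char 4 \<pi>"
proof -
  have "{1, 2, 3, 4} - {4} = {1, 2, 3::nat}" by auto
  then show ?thesis unfolding push_D8[OF assms] D6char_def by simp
qed



lemma mon_neg_ne: "(m::mon) \<noteq> 0 \<Longrightarrow> m \<noteq> - m"
  by (cases m) (auto simp: zero_prod_def)

lemma pair_prod:
  fixes h :: "mon \<Rightarrow> complex"
  assumes "finite V" "\<forall>m\<in>V. - m \<in> V" "\<forall>m\<in>V. m \<noteq> 0 \<longrightarrow> h m * h (- m) = 1"
  shows "(\<Prod>m\<in>V. h m) = (if 0 \<in> V then h 0 else 1)"
  using assms
proof (induction "card V" arbitrary: V rule: less_induct)
  case less
  show ?case
  proof (cases "V \<subseteq> {0}")
    case True
    then have "V = {} \<or> V = {0}" by blast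
    then show ?thesis by auto
  next
    case False
    then obtain m where m: "m \<in> V" "m \<noteq> 0" by blast
    have mm: "- m \<in> V" using less.prems m by blast
    have ne: "m \<noteq> - m" using mon_neg_ne m by blast
    let ?V = "V - {m, - m}"
    have card: "card ?V < card V"
      using less.prems(1) m by (intro psubset_card_mono) auto
    have cl: "\<forall>k\<in>?V. - k \<in> ?V" using less.prems(2) by (auto simp: minus_equation_iff)
    have IH: "(\<Prod>k\<in>?V. h k) = (if 0 \<in> ?V then h 0 else 1)"
      using less.hyps[OF card] less.prems cl by auto
    have "(\<Prod>k\<in>V. h k) = h m * (\<Prod>k\<in>V - {m}. h k)"
      using less.prems(1) m by (simp add: prod.remove)
    also have "(\<Prod>k\<in>V - {m}. h k) = h (- m) * (\<Prod>k\<in>?V. h k)"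
    proof -
      have "- m \<in> V - {m}" using mm ne by auto
      then have "(\<Prod>k\<in>V - {m}. h k) = h (- m) * (\<Prod>k\<in>V - {m} - {- m}. h k)"
        using less.prems(1) by (simp add: prod.remove)
      moreover have "V - {m} - {- m} = ?V" by auto
      ultimately show ?thesis by simp
    qed
    finally have "(\<Prod>k\<in>V. h k) = (h m * h (- m)) * (\<Prod>k\<in>?V. h k)" by (simp add: mult_ac)
    also have "h m * h (- m) = 1" using less.prems(3) m by blast
    also have "0 \<in> ?V \<longleftrightarrow> 0 \<in> V" using m by auto
    then have "(\<Prod>k\<in>?V. h k) = (if 0 \<in> V then h 0 else 1)" using IH by simp
    finally show ?thesis by simp
  qed
qed

lemma antisym_index:
  fixes q1 q2 q3 x :: complex and Y :: character
  assumes nz: "q1 \<noteq> 0" "q2 \<noteq> 0" "q3 \<noteq> 0" "x \<noteq> 0"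
    and keysT: "\<forall>m\<in>Poly_Mapping.keys (dual Y - Y). evm (q1, q2, q3, x, 1) m \<noteq> 1"
    and det: "PI (\<lambda>m. - evm (q1, q2, q3, x, 1) m) Y = 1"
  shows "PI (\<lambda>m. 1 - inverse (evm (q1, q2, q3, x, 1) m)) (dual Y - Y) = (-1) powi Poly_Mapping.lookup Y 0"
proof -
  define E where "E m = evm (q1, q2, q3, x, 1) m" for m
  define G where "G m = 1 - inverse (E m)" for m
  define H where "H m = (- E m) powi Poly_Mapping.lookup Y m" for m
  define T where "T = dual Y - Y"
  define S where "S = Poly_Mapping.keys T"
  have Enz: "E m \<noteq> 0" for m unfolding E_def using evm_nz[OF nz one_neq_zero] .
  have Eneg: "E (- m) = inverse (E m)" for m unfolding E_def by (rule evm_uminus)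
  have E0: "E 0 = 1" unfolding E_def by (rule evm_zero)
  have lT: "Poly_Mapping.lookup T m = Poly_Mapping.lookup Y (- m) - Poly_Mapping.lookup Y m" for m
    unfolding T_def by (simp add: lookup_minus lookup_dual)
  have Sneg: "- m \<in> S" if "m \<in> S" for m
    using that by (simp add: S_def in_keys_iff lT)
  have S1: "E m \<noteq> 1" if "m \<in> S" for m using that keysT unfolding S_def T_def E_def by blast
  have Gnz: "G m \<noteq> 0" if "m \<in> S" for m
    using S1[OF that] Enz[of m] unfolding G_def by (auto simp: field_simps)
  have Gratio: "G (- m) / G m = - E m" if "m \<in> S" for m
    using S1[OF that] Enz[of m] unfolding G_def Eneg by (auto simp: field_simps)
  have finS: "finite S" unfolding S_def by simp
  have imS: "uminus ` S = S"
  proof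
    show "uminus ` S \<subseteq> S" using Sneg by auto
    show "S \<subseteq> uminus ` S"
    proof
      fix m assume "m \<in> S"
      then have "- m \<in> S" by (rule Sneg)
      then show "m \<in> uminus ` S" by (metis image_eqI minus_minus)
    qed
  qed
  have "PI G T = (\<Prod>m\<in>S. G m powi (Poly_Mapping.lookup Y (- m) - Poly_Mapping.lookup Y m))"
    unfolding PI_def S_def lT ..
  also have "\<dots> = (\<Prod>m\<in>S. G m powi Poly_Mapping.lookup Y (- m) / G m powi Poly_Mapping.lookup Y m)"
    by (rule prod.cong) (use Gnz in \<open>auto simp: power_int_diff\<close>)
  also have "\<dots> = (\<Prod>m\<in>S. G m powi Poly_Mapping.lookup Y (- m)) / (\<Prod>m\<in>S. G m powi Poly_Mapping.lookup Y m)"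
    by (rule prod_dividef)
  also have "(\<Prod>m\<in>S. G m powi Poly_Mapping.lookup Y (- m)) = (\<Prod>m\<in>S. G (- m) powi Poly_Mapping.lookup Y m)"
  proof -
    have "(\<Prod>m\<in>S. G m powi Poly_Mapping.lookup Y (- m)) = (\<Prod>m\<in>uminus ` S. G m powi Poly_Mapping.lookup Y (- m))"
      by (simp add: imS)
    also have "\<dots> = (\<Prod>m\<in>S. G (- m) powi Poly_Mapping.lookup Y m)"
      by (subst prod.reindex) (auto simp: inj_on_def)
    finally show ?thesis .
  qed
  also have "(\<Prod>m\<in>S. G (- m) powi Poly_Mapping.lookup Y m) / (\<Prod>m\<in>S. G m powi Poly_Mapping.lookup Y m)
      = (\<Prod>m\<in>S. (G (- m) / G m) powi Poly_Mapping.lookup Y m)"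
    by (simp add: prod_dividef power_int_divide_distrib)
  also have "\<dots> = (\<Prod>m\<in>S. H m)"
    unfolding H_def by (rule prod.cong) (auto simp: Gratio)
  finally have A: "PI G T = (\<Prod>m\<in>S. H m)" .
  define U where "U = S \<union> Poly_Mapping.keys Y"
  have finU: "finite U" unfolding U_def using finS by simp
  have "(\<Prod>m\<in>U. H m) = 1"
    using det unfolding H_def E_def[symmetric] by (subst (asm) PI_superset[of U]) (auto simp: finU U_def finS)
  moreover have "(\<Prod>m\<in>U. H m) = (\<Prod>m\<in>U - S. H m) * (\<Prod>m\<in>S. H m)"
    by (rule prod.subset_diff) (auto simp: U_def finU finS)
  moreover have "(\<Prod>m\<in>U - S. H m) = (-1) powi Poly_Mapping.lookup Y 0"
  proof -
    have symm: "Poly_Mapping.lookup Y (- m) = Poly_Mapping.lookup Y m" if "m \<in> U - S" for m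
      using that by (simp add: S_def in_keys_iff lT)
    have cl: "\<forall>m\<in>U - S. - m \<in> U - S"
    proof
      fix m assume m: "m \<in> U - S"
      then have "m \<in> Poly_Mapping.keys Y" unfolding U_def by blast
      then have "- m \<in> Poly_Mapping.keys Y" using symm[OF m] by (simp add: in_keys_iff)
      moreover have "- m \<notin> S" using symm[OF m] by (simp add: S_def in_keys_iff lT)
      ultimately show "- m \<in> U - S" unfolding U_def by blast
    qed
    have pr: "\<forall>m\<in>U - S. m \<noteq> 0 \<longrightarrow> H m * H (- m) = 1"
    proof (intro ballI impI)
      fix m assume m: "m \<in> U - S"
      have "H m * H (- m) = ((- E m) * (- inverse (E m))) powi Poly_Mapping.lookup Y m"
        unfolding H_def Eneg symm[OF m] by (simp only: power_int_mult_distrib)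
      also have "\<dots> = 1" using Enz[of m] by simp
      finally show "H m * H (- m) = 1" .
    qed
    have "(\<Prod>m\<in>U - S. H m) = (if 0 \<in> U - S then H 0 else 1)"
      by (rule pair_prod) (use finU cl pr in auto)
    also have "\<dots> = (-1) powi Poly_Mapping.lookup Y 0"
    proof (cases "0 \<in> U - S")
      case True then show ?thesis unfolding H_def E0 by simp
    next
      case False
      have "0 \<notin> S" by (simp add: S_def in_keys_iff lT)
      then have "0 \<notin> Poly_Mapping.keys Y" using False unfolding U_def by blast
      then show ?thesis by (subst if_not_P[OF False]) (simp add: in_keys_iff)
    qed
    finally show ?thesis .
  qed
  ultimately have "(-1) powi Poly_Mapping.lookup Y 0 * (\<Prod>m\<in>S. H m) = 1" by simp
  then have "(\<Prod>m\<in>S. H m) = (-1) powi Poly_Mapping.lookup Y 0"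
    by (metis power_int_minus_one_mult_self' mult_1_right)
  then show ?thesis using A unfolding G_def E_def T_def by argo
qed



lemma ball14: "(\<forall>b\<in>{1..4::nat}. P b) \<longleftrightarrow> P 1 \<and> P 2 \<and> P 3 \<and> P 4"
proof -
  have "{1..4::nat} = {1, 2, 3, 4}" by auto
  then show ?thesis by simp
qed

definition Wv :: "point4 \<Rightarrow> mon" where
  "Wv v = (case v of (v1, v2, v3, v4) \<Rightarrow> (int v4 - int v1, int v4 - int v2, int v4 - int v3, 0, 0))"

definition Cv :: "point4 \<Rightarrow> point4 \<Rightarrow> bool" where
  "Cv v p \<longleftrightarrow> (\<forall>b\<in>{1..4}. coord b v < coord b p)"

lemma sum_ind: "finite A \<Longrightarrow> (\<Sum>x\<in>A. if P x then 1 else 0 :: int) = int (card {x\<in>A. P x})"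
  by (simp add: sum.inter_filter[symmetric])

lemma count_shift:
  assumes sp: "solid_partition \<pi>" and ca: "\<forall>p\<in>\<pi>. coord a p = 1" and a: "a \<in> {1, 2, 3}"
    and va: "coord a v = 0" and p: "p \<in> \<pi>"
  shows "(\<Sum>p'\<in>\<pi>. if box_mon p' - box_mon p = Wv v then 1 else 0 :: int) = (if Cv v p then 1 else 0)"
proof -
  obtain i1 i2 i3 i4 where pe: "p = (i1, i2, i3, i4)" by (cases p) auto
  obtain v1 v2 v3 v4 where ve: "v = (v1, v2, v3, v4)" by (cases v) auto
  have fin: "finite \<pi>" and ge1: "\<And>q b. q \<in> \<pi> \<Longrightarrow> b \<in> {1..4} \<Longrightarrow> 1 \<le> coord b q"
    and down: "\<And>q q'. q \<in> \<pi> \<Longrightarrow> (\<forall>b\<in>{1..4}. 1 \<le> coord b q' \<and> coord b q' \<le> coord b q) \<Longrightarrow> q' \<in> \<pi>"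
    using sp unfolding solid_partition_def by blast+
  have pi: "1 \<le> i1" "1 \<le> i2" "1 \<le> i3" "1 \<le> i4" using ge1[OF p, of 1] ge1[OF p, of 2] ge1[OF p, of 3] ge1[OF p, of 4] unfolding pe by simp_all
  have pa: "coord a p = 1" using ca p by blast
  let ?q = "(i1 - v1, i2 - v2, i3 - v3, i4 - v4)"
  have set: "{p'\<in>\<pi>. box_mon p' - box_mon p = Wv v} = (if Cv v p then {?q} else {})"
  proof (rule set_eqI)
    fix p' :: point4
    obtain j1 j2 j3 j4 where pe': "p' = (j1, j2, j3, j4)" by (cases p') auto
    show "p' \<in> {p'\<in>\<pi>. box_mon p' - box_mon p = Wv v} \<longleftrightarrow> p' \<in> (if Cv v p then {?q} else {})"
    proof
      assume h: "p' \<in> {p'\<in>\<pi>. box_mon p' - box_mon p = Wv v}"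
      then have p'pi: "p' \<in> \<pi>" by blast
      have pj: "1 \<le> j1" "1 \<le> j2" "1 \<le> j3" "1 \<le> j4" using ge1[OF p'pi, of 1] ge1[OF p'pi, of 2] ge1[OF p'pi, of 3] ge1[OF p'pi, of 4] unfolding pe' by simp_all
      have p'a: "coord a p' = 1" using ca p'pi by blast
      have eq: "int j1 - int j4 - (int i1 - int i4) = int v4 - int v1"
        "int j2 - int j4 - (int i2 - int i4) = int v4 - int v2"
        "int j3 - int j4 - (int i3 - int i4) = int v4 - int v3"
        using h unfolding pe pe' ve by (auto simp: box_mon_eq Wv_def)
      have "Cv v p \<and> p' = ?q"
        using a pa p'a va eq pi pj unfolding pe pe' ve Cv_def ball14 by auto
      then show "p' \<in> (if Cv v p then {?q} else {})" by simp
    next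
      assume h: "p' \<in> (if Cv v p then {?q} else {})"
      then have C: "Cv v p" and pq: "p' = ?q" by (auto split: if_splits)
      have lt: "v1 < i1" "v2 < i2" "v3 < i3" "v4 < i4" using C unfolding Cv_def ball14 pe ve by auto
      have "?q \<in> \<pi>"
        by (rule down[OF p]) (use lt in \<open>auto simp: ball14 pe\<close>)
      moreover have "box_mon ?q - box_mon p = Wv v"
        using lt unfolding pe ve by (simp add: box_mon_eq Wv_def of_nat_diff zero_prod_def)
      ultimately show "p' \<in> {p'\<in>\<pi>. box_mon p' - box_mon p = Wv v}" using pq by simp
    qed
  qed
  show ?thesis
    unfolding sum_ind[OF fin] set by simp
qed



lemma Ych_sum:
  assumes fin: "finite \<pi>" and o: "{1, 2, 3} - {a} = {b, c}" and bc: "b \<noteq> c"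
  shows "Ych a \<pi> = (\<Sum>p\<in>\<pi>. \<Sum>p'\<in>\<pi>. (1 - mono (- qv b)) * (1 - mono (- qv c)) * mono (box_mon p' - box_mon p - qv a))"
proof -
  have "Ych a \<pi> = ((1 - mono (- qv b)) * (1 - mono (- qv c)) * mono (- qv a)) * (dual (Rchar \<pi>) * Rchar \<pi>)"
    unfolding Ych_def o Pv2[OF bc] by (simp add: mult_ac)
  also have "dual (Rchar \<pi>) * Rchar \<pi> = (\<Sum>p\<in>\<pi>. \<Sum>p'\<in>\<pi>. mono (- box_mon p) * mono (box_mon p'))"
    unfolding Rchar_dual[OF fin] by (simp only: Rchar_def sum_product)
  finally have "Ych a \<pi> = (\<Sum>p\<in>\<pi>. \<Sum>p'\<in>\<pi>. ((1 - mono (- qv b)) * (1 - mono (- qv c)) * mono (- qv a)) *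
      (mono (- box_mon p) * mono (box_mon p')))"
    by (simp only: sum_distrib_left)
  also have "\<dots> = (\<Sum>p\<in>\<pi>. \<Sum>p'\<in>\<pi>. (1 - mono (- qv b)) * (1 - mono (- qv c)) * mono (box_mon p' - box_mon p - qv a))"
  proof (intro sum.cong refl)
    fix p p'
    have "- qv a + (- box_mon p + box_mon p') = box_mon p' - box_mon p - qv a"
      by (simp add: algebra_simps)
    then show "((1 - mono (- qv b)) * (1 - mono (- qv c)) * mono (- qv a)) * (mono (- box_mon p) * mono (box_mon p'))
      = (1 - mono (- qv b)) * (1 - mono (- qv c)) * mono (box_mon p' - box_mon p - qv a)"
      by (simp only: mult.assoc mono_mult)
  qed
  finally show ?thesis .
qed

lemma lookup_mono: "Poly_Mapping.lookup (mono m) k = (if m = k then 1 else 0)"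
  unfolding mono_def by (simp add: lookup_single when_def)

lemma lookup_Q0:
  "Poly_Mapping.lookup ((1 - mono (- qv b)) * (1 - mono (- qv c)) * mono A) 0 =
    (if A = 0 then 1 else 0) - (if A = qv b then 1 else 0) - (if A = qv c then 1 else 0)
    + (if A = qv b + qv c then 1 else 0)"
proof -
  have "(1 - mono (- qv b)) * (1 - mono (- qv c)) * mono A
     = mono A - mono (- qv b + A) - mono (- qv c + A) + mono (- qv b + - qv c + A)"
    by (simp add: algebra_simps mono_mult)
  moreover have "(- qv b + A = 0) \<longleftrightarrow> A = qv b" "(- qv c + A = 0) \<longleftrightarrow> A = qv c"
    "(- qv b + - qv c + A = 0) \<longleftrightarrow> A = qv b + qv c"
    by (auto simp: algebra_simps)
  ultimately show ?thesis
    by (simp add: lookup_add lookup_minus lookup_mono)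
qed

lemma Y0_gen:
  assumes sp: "solid_partition \<pi>" and ca: "\<forall>p\<in>\<pi>. coord a p = 1" and a: "a \<in> {1, 2, 3}"
    and o: "{1, 2, 3} - {a} = {b, c}" and bc: "b \<noteq> c"
    and v: "coord a v0 = 0" "coord a v1 = 0" "coord a v2 = 0" "coord a v3 = 0"
    and w: "qv a = Wv v0" "qv a + qv b = Wv v1" "qv a + qv c = Wv v2" "qv a + (qv b + qv c) = Wv v3"
    and pw: "\<forall>p\<in>\<pi>. (if Cv v0 p then 1 else 0) - (if Cv v1 p then 1 else 0) - (if Cv v2 p then 1 else 0)
               + (if Cv v3 p then 1 else 0) = (if (\<exists>i j. p = (i, i, i, j) \<and> i < j) then 1 else (0::int))"
  shows "Poly_Mapping.lookup (Ych a \<pi>) 0 = int (sigma4 \<pi>)"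
proof -
  have fin: "finite \<pi>" using sp unfolding solid_partition_def by blast
  have eqv: "(box_mon p' - box_mon p - qv a = t) \<longleftrightarrow> (box_mon p' - box_mon p = qv a + t)" for p p' t
    by (auto simp: algebra_simps)
  have "Poly_Mapping.lookup (Ych a \<pi>) 0 = (\<Sum>p\<in>\<pi>. \<Sum>p'\<in>\<pi>.
      (if box_mon p' - box_mon p = Wv v0 then 1 else 0) - (if box_mon p' - box_mon p = Wv v1 then 1 else 0)
    - (if box_mon p' - box_mon p = Wv v2 then 1 else 0) + (if box_mon p' - box_mon p = Wv v3 then 1 else 0))"
    unfolding Ych_sum[OF fin o bc] lookup_sum lookup_Q0 eqv w[symmetric] by simp
  also have "\<dots> = (\<Sum>p\<in>\<pi>. (if Cv v0 p then 1 else 0) - (if Cv v1 p then 1 else 0) - (if Cv v2 p then 1 else 0)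
               + (if Cv v3 p then 1 else 0))"
    by (rule sum.cong[OF refl])
      (simp add: sum.distrib sum_subtractf count_shift[OF sp ca a v(1)] count_shift[OF sp ca a v(2)]
        count_shift[OF sp ca a v(3)] count_shift[OF sp ca a v(4)])
  also have "\<dots> = (\<Sum>p\<in>\<pi>. if (\<exists>i j. p = (i, i, i, j) \<and> i < j) then 1 else (0::int))"
    by (rule sum.cong[OF refl]) (use pw in blast)
  also have "\<dots> = int (sigma4 \<pi>)"
    unfolding sum_ind[OF fin] sigma4_def ..
  finally show ?thesis .
qed



lemma pw_lemma:
  assumes sp: "solid_partition \<pi>" and ca: "\<forall>p\<in>\<pi>. coord a p = 1"
    and H: "\<And>i1 i2 i3 i4. 1 \<le> i1 \<Longrightarrow> 1 \<le> i2 \<Longrightarrow> 1 \<le> i3 \<Longrightarrow> 1 \<le> i4 \<Longrightarrow>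
              coord a (i1, i2, i3, i4) = 1 \<Longrightarrow> Q (i1, i2, i3, i4)"
  shows "\<forall>p\<in>\<pi>. Q p"
proof
  fix p assume p: "p \<in> \<pi>"
  obtain i1 i2 i3 i4 where pe: "p = (i1, i2, i3, i4)" by (cases p) auto
  have ge1: "\<And>b. b \<in> {1..4} \<Longrightarrow> 1 \<le> coord b p" using sp p unfolding solid_partition_def by blast
  have c: "coord a (i1, i2, i3, i4) = 1" using ca p pe by blast
  have g: "1 \<le> i1" "1 \<le> i2" "1 \<le> i3" "1 \<le> i4"
    using ge1[of 1] ge1[of 2] ge1[of 3] ge1[of 4] by (simp_all add: pe)
  show "Q p" using H[OF g c] pe by simp
qed

lemma Cv_eq: "Cv (v1, v2, v3, v4) (i1, i2, i3, i4) \<longleftrightarrow> v1 < i1 \<and> v2 < i2 \<and> v3 < i3 \<and> v4 < i4"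
  unfolding Cv_def ball14 by simp

lemma Y0:
  assumes sp: "solid_partition \<pi>" and ca: "\<forall>p\<in>\<pi>. coord a p = 1" and a: "a \<in> {1, 2, 3}"
  shows "Poly_Mapping.lookup (Ych a \<pi>) 0 = int (sigma4 \<pi>)"
proof -
  from a consider "a = 1" | "a = 2" | "a = 3" by auto
  then show ?thesis
  proof cases
    case 1
    have pw: "\<forall>p\<in>\<pi>. (if Cv (0,1,1,1) p then 1 else 0) - (if Cv (0,0,1,1) p then 1 else 0) - (if Cv (0,1,0,1) p then 1 else 0)
               + (if Cv (0,0,0,1) p then 1 else 0) = (if (\<exists>i j. p = (i, i, i, j) \<and> i < j) then 1 else (0::int))"
      by (rule pw_lemma[OF sp ca]) (use 1 in \<open>auto simp: Cv_eq\<close>)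
    show ?thesis
      by (rule Y0_gen[OF sp ca a, of 2 3 "(0,1,1,1)" "(0,0,1,1)" "(0,1,0,1)" "(0,0,0,1)"]) (use 1 pw in \<open>auto simp: qv_def Wv_def\<close>)
  next
    case 2
    have pw: "\<forall>p\<in>\<pi>. (if Cv (1,0,1,1) p then 1 else 0) - (if Cv (0,0,1,1) p then 1 else 0) - (if Cv (1,0,0,1) p then 1 else 0)
               + (if Cv (0,0,0,1) p then 1 else 0) = (if (\<exists>i j. p = (i, i, i, j) \<and> i < j) then 1 else (0::int))"
      by (rule pw_lemma[OF sp ca]) (use 2 in \<open>auto simp: Cv_eq\<close>)
    show ?thesis
      by (rule Y0_gen[OF sp ca a, of 1 3 "(1,0,1,1)" "(0,0,1,1)" "(1,0,0,1)" "(0,0,0,1)"]) (use 2 pw in \<open>auto simp: qv_def Wv_def\<close>)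
  next
    case 3
    have pw: "\<forall>p\<in>\<pi>. (if Cv (1,1,0,1) p then 1 else 0) - (if Cv (0,1,0,1) p then 1 else 0) - (if Cv (1,0,0,1) p then 1 else 0)
               + (if Cv (0,0,0,1) p then 1 else 0) = (if (\<exists>i j. p = (i, i, i, j) \<and> i < j) then 1 else (0::int))"
      by (rule pw_lemma[OF sp ca]) (use 3 in \<open>auto simp: Cv_eq\<close>)
    show ?thesis
      by (rule Y0_gen[OF sp ca a, of 1 2 "(1,1,0,1)" "(0,1,0,1)" "(1,0,0,1)" "(0,0,0,1)"]) (use 3 pw in \<open>auto simp: qv_def Wv_def\<close>)
  qed
qed



lemma PI_Q:
  fixes q1 q2 q3 x :: complex
  assumes nz: "q1 \<noteq> 0" "q2 \<noteq> 0" "q3 \<noteq> 0" "x \<noteq> 0"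
  shows "PI (\<lambda>m. - evm (q1, q2, q3, x, 1) m) ((1 - mono B) * (1 - mono C) * mono A) = 1"
proof -
  define E where "E m = evm (q1, q2, q3, x, 1) m" for m
  have Enz: "E m \<noteq> 0" for m unfolding E_def using evm_nz[OF nz one_neq_zero] .
  have Eadd: "E (m + n) = E m * E n" for m n unfolding E_def using evm_add[OF nz one_neq_zero] .
  have nz': "\<forall>m\<in>S. - E m \<noteq> 0" for S using Enz by simp
  have "(1 - mono B) * (1 - mono C) * mono A = (mono A + mono (B + C + A)) - (mono (B + A) + mono (C + A))"
    by (simp add: algebra_simps mono_mult)
  then have "PI (\<lambda>m. - E m) ((1 - mono B) * (1 - mono C) * mono A)
     = ((- E A) * (- E (B + C + A))) / ((- E (B + A)) * (- E (C + A)))"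
    by (simp only: PI_diff[OF nz'] PI_add[OF nz'] PI_mono)
  also have "\<dots> = 1" using Enz[of A] Enz[of B] Enz[of C] by (simp add: Eadd)
  finally show ?thesis unfolding E_def .
qed

lemma PI_Y:
  fixes q1 q2 q3 x :: complex
  assumes nz: "q1 \<noteq> 0" "q2 \<noteq> 0" "q3 \<noteq> 0" "x \<noteq> 0"
    and fin: "finite \<pi>" and o: "{1, 2, 3} - {a} = {b, c}" and bc: "b \<noteq> c"
  shows "PI (\<lambda>m. - evm (q1, q2, q3, x, 1) m) (Ych a \<pi>) = 1"
proof -
  have nz': "\<forall>m. - evm (q1, q2, q3, x, 1) m \<noteq> 0" using evm_nz[OF nz one_neq_zero] by simp
  show ?thesis
    unfolding Ych_sum[OF fin o bc]
    by (simp add: PI_sum[OF nz'] fin PI_Q[OF nz])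
qed

lemma PI_Ya:
  fixes q1 q2 q3 x :: complex
  assumes nz: "q1 \<noteq> 0" "q2 \<noteq> 0" "q3 \<noteq> 0" "x \<noteq> 0"
    and fin: "finite \<pi>" and a: "a \<in> {1, 2, 3}"
  shows "PI (\<lambda>m. - evm (q1, q2, q3, x, 1) m) (Ych a \<pi>) = 1"
proof -
  from a consider "a = 1" | "a = 2" | "a = 3" by auto
  then show ?thesis
  proof cases
    case 1 then show ?thesis by (intro PI_Y[OF nz fin, of a 2 3]) auto
  next
    case 2 then show ?thesis by (intro PI_Y[OF nz fin, of a 1 3]) auto
  next
    case 3 then show ?thesis by (intro PI_Y[OF nz fin, of a 1 2]) auto
  qed
qed

lemma G_nz: "z \<noteq> 1 \<Longrightarrow> 1 - inverse (z::complex) \<noteq> 0"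
  by (metis eq_iff_diff_eq_0 inverse_1 inverse_inverse_eq)

theorem lemma6p14:
  fixes q1 q2 q3 x :: complex and a :: nat and \<pi> :: "point4 set"
  assumes "q1 \<noteq> 0" and "q2 \<noteq> 0" and "q3 \<noteq> 0" and "x \<noteq> 0"
    and "a \<in> {1..4}"
    and "solid_partition \<pi>"
    and "\<forall>p\<in>\<pi>. coord a p = 1"
    and "\<forall>m\<in>Poly_Mapping.keys (D8char \<pi>).
           evm (q1, q2, q3, x, evm (q1, q2, q3, x, 1) (qv a)) m \<noteq> 1"
    and "\<forall>m\<in>Poly_Mapping.keys (D6char a \<pi>). evm (q1, q2, q3, x, 1) m \<noteq> 1"
  shows "(-1) ^ sigma4 \<pi> * index_at (q1, q2, q3, x, evm (q1, q2, q3, x, 1) (qv a)) (D8char \<pi>)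
         = index_at (q1, q2, q3, x, 1) (D6char a \<pi>)"
proof -
  note nz = assms(1-4)
  have sp: "solid_partition \<pi>" and ca: "\<forall>p\<in>\<pi>. coord a p = 1" using assms(6,7) .
  have h8: "\<forall>m\<in>Poly_Mapping.keys (D8char \<pi>). evm (q1, q2, q3, x, evm (q1, q2, q3, x, 1) (qv a)) m \<noteq> 1"
    using assms(8) .
  have h9: "\<forall>m\<in>Poly_Mapping.keys (D6char a \<pi>). evm (q1, q2, q3, x, 1) m \<noteq> 1" using assms(9) .
  have fin: "finite \<pi>" using sp unfolding solid_partition_def by blast
  define Gw where "Gw m = 1 - inverse (evm (q1, q2, q3, x, 1) m)" for m
  define Gv where "Gv m = 1 - inverse (evm (q1, q2, q3, x, evm (q1, q2, q3, x, 1) (qv a)) m)" for m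
  have step1: "index_at (q1, q2, q3, x, evm (q1, q2, q3, x, 1) (qv a)) (D8char \<pi>)
      = PI Gw (push (sub a) (D8char \<pi>))"
    unfolding index_at_PI Gv_def[symmetric]
  proof (rule PI_push[symmetric])
    show "\<forall>m\<in>Poly_Mapping.keys (D8char \<pi>). Gw (sub a m) = Gv m \<and> Gv m \<noteq> 0"
      using h8 unfolding Gw_def Gv_def by (auto simp: evm_sub[OF nz] G_nz)
  qed
  from assms(5) consider "a = 4" | "a \<in> {1, 2, 3}" by fastforce
  then show ?thesis
  proof cases
    case 1
    have s0: "sigma4 \<pi> = 0"
    proof -
      have "{p\<in>\<pi>. \<exists>i j. p = (i, i, i, j) \<and> i < j} = {}"
      proof (rule ccontr)
        assume "{p\<in>\<pi>. \<exists>i j. p = (i, i, i, j) \<and> i < j} \<noteq> {}"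
        then obtain i j where ij: "(i, i, i, j) \<in> \<pi>" "i < j" by blast
        have "coord 4 (i, i, i, j) = 1" using ca ij 1 by blast
        moreover have "1 \<le> coord 1 (i, i, i, j)"
        proof -
          have ge: "\<forall>p\<in>\<pi>. \<forall>b\<in>{1..4}. 1 \<le> coord b p" using sp unfolding solid_partition_def by blast
          have "(1::nat) \<in> {1..4}" by simp
          then show ?thesis using ge ij(1) by blast
        qed
        ultimately show False using ij by simp
      qed
      then show ?thesis unfolding sigma4_def by (simp only: card.empty)
    qed
    show ?thesis
      using step1 unfolding 1 ident4[OF fin] s0 index_at_PI Gw_def by simp
  next
    case 2
    define Y where "Y = Ych a \<pi>"
    define T where "T = dual Y - Y"
    have id: "push (sub a) (D8char \<pi>) = D6char a \<pi> + T"
      unfolding T_def Y_def by (rule ident[OF 2 fin])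
    have keysT: "\<forall>m\<in>Poly_Mapping.keys T. evm (q1, q2, q3, x, 1) m \<noteq> 1"
    proof (intro ballI notI)
      fix m assume m: "m \<in> Poly_Mapping.keys T" and e: "evm (q1, q2, q3, x, 1) m = 1"
      have l6: "Poly_Mapping.lookup (D6char a \<pi>) m = 0" using h9 e by (auto simp: in_keys_iff)
      have l8: "Poly_Mapping.lookup (push (sub a) (D8char \<pi>)) m = 0"
        unfolding lookup_push
      proof (rule sum.neutral, rule ballI)
        fix k assume k: "k \<in> Poly_Mapping.keys (D8char \<pi>)"
        show "(if sub a k = m then Poly_Mapping.lookup (D8char \<pi>) k else 0) = 0"
        proof (cases "sub a k = m")
          case True
          then have "evm (q1, q2, q3, x, evm (q1, q2, q3, x, 1) (qv a)) k = 1"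
            using e by (simp add: evm_sub[OF nz])
          then show ?thesis using h8 k by blast
        qed simp
      qed
      have "Poly_Mapping.lookup T m = 0" using l6 l8 unfolding id by (simp add: lookup_add)
      then show False using m by (simp add: in_keys_iff)
    qed
    have Gnz: "\<forall>m\<in>Poly_Mapping.keys (D6char a \<pi>) \<union> Poly_Mapping.keys T. Gw m \<noteq> 0"
      using h9 keysT unfolding Gw_def by (auto simp: G_nz)
    have "PI Gw (push (sub a) (D8char \<pi>)) = PI Gw (D6char a \<pi>) * PI Gw T"
      unfolding id by (rule PI_add[OF Gnz])
    also have "PI Gw T = (-1) powi Poly_Mapping.lookup Y 0"
      unfolding Gw_def T_def
      by (rule antisym_index[OF nz]) (use keysT PI_Ya[OF nz fin 2] in \<open>simp_all add: T_def Y_def\<close>)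
    also have "Poly_Mapping.lookup Y 0 = int (sigma4 \<pi>)" unfolding Y_def by (rule Y0[OF sp ca 2])
    finally have c: "PI Gw (push (sub a) (D8char \<pi>)) = PI Gw (D6char a \<pi>) * (-1) powi int (sigma4 \<pi>)" .
    have i6: "index_at (q1, q2, q3, x, 1) (D6char a \<pi>) = PI Gw (D6char a \<pi>)"
      unfolding index_at_PI Gw_def ..
    have eq: "index_at (q1, q2, q3, x, evm (q1, q2, q3, x, 1) (qv a)) (D8char \<pi>)
        = index_at (q1, q2, q3, x, 1) (D6char a \<pi>) * (-1) ^ sigma4 \<pi>"
      by (simp only: step1 i6 c power_int_of_nat)
    have sq: "(-1::complex) ^ sigma4 \<pi> * (-1) ^ sigma4 \<pi> = 1"
      by (simp flip: power_mult_distrib)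
    have "(-1) ^ sigma4 \<pi> * (index_at (q1, q2, q3, x, 1) (D6char a \<pi>) * (-1) ^ sigma4 \<pi>)
        = ((-1::complex) ^ sigma4 \<pi> * (-1) ^ sigma4 \<pi>) * index_at (q1, q2, q3, x, 1) (D6char a \<pi>)"
      by (simp only: mult_ac)
    then show ?thesis unfolding eq sq by simp
  qed
qed

end
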